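(* Let $G$ be a group containing commuting elements $A$ and $B$ whose centralisers $C_G(A)$ and $C_G(B)$ are both different from $G$, are both non-soluble, and are not equal to each other. Let $\mathbb{F}$ be an algebraically closed field and suppose there is a faithful representation of $G$ into $GL(3,\mathbb{F})$. Then after conjugating the image in $GL(3,\mathbb{F})$, the images of $A$ and $B$ are $$A=\begin{pmatrix}\lambda&0&0\\0&\lambda&0\\0&0&\mu\end{pmatrix},\qquad B=\begin{pmatrix}x&0&0\\0&y&0\\0&0&x\end{pmatrix}$$ for some non-zero scalars $\lambda,\mu,x,y\in\mathbb{F}$ with $\lambda\neq\mu$ and $x\neq y$. *)

theory Defs
  imports "HOL-Analysis.Analysis" "HOL-Algebra.Solvable_Groups"
    "HOL-Computational_Algebra.Polynomial"
begin

definition centraliser :: "('a, 'b) monoid_scheme \<Rightarrow> 'a \<Rightarrow> 'a set" where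
  "centraliser G a = {g \<in> carrier G. g \<otimes>\<^bsub>G\<^esub> a = a \<otimes>\<^bsub>G\<^esub> g}"

definition alg_closed :: "'f::field itself \<Rightarrow> bool" where
  "alg_closed _ \<longleftrightarrow> (\<forall>p::'f poly. degree p \<ge> 1 \<longrightarrow> (\<exists>x. poly p x = 0))"

definition GL3 :: "('f::field ^3^3) monoid" where
  "GL3 = \<lparr> carrier = {M. invertible M}, mult = (**), one = mat 1 \<rparr>"

text \<open>Diagonal 3x3 matrix diag(a,b,c); the indices of type 3 are 1, 2, 3.\<close>
definition diag3 :: "'f::field \<Rightarrow> 'f \<Rightarrow> 'f \<Rightarrow> 'f ^3^3" where
  "diag3 a b c = (\<chi> i j. if i = j then (if i = 1 then a else if i = 2 then b else c) else 0)"

end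

theory Submission
  imports Defs
begin


definition UT :: "'f::field^3^3 \<Rightarrow> bool" where
  "UT X \<longleftrightarrow> X$2$1 = 0 \<and> X$3$1 = 0 \<and> X$3$2 = 0"

definition cj :: "'f::field^3^3 \<Rightarrow> 'f^3^3 \<Rightarrow> 'f^3^3" where
  "cj S X = matrix_inv S ** X ** S"

definition cm :: "'f::field^3 \<Rightarrow> 'f^3 \<Rightarrow> 'f^3 \<Rightarrow> 'f^3^3" where
  "cm u v w = (\<chi> i j. if j = 1 then u$i else if j = 2 then v$i else w$i)"

lemmas msimps = vec_eq_iff forall_3 vector_3 matrix_vector_mult_def sum_3
  matrix_matrix_mult_def cm_def diag3_def mat_def

lemma minv_l: fixes S :: "'f::field^'n^'n" assumes "invertible S"
  shows "matrix_inv S ** S = mat 1" and "S ** matrix_inv S = mat 1"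
proof -
  have "\<exists>A'. S ** A' = mat 1 \<and> A' ** S = mat 1" using assms unfolding invertible_def .
  then have "S ** matrix_inv S = mat 1 \<and> matrix_inv S ** S = mat 1"
    unfolding matrix_inv_def by (rule someI_ex)
  then show "matrix_inv S ** S = mat 1" "S ** matrix_inv S = mat 1" by auto
qed

lemma minv_inv: fixes S :: "'f::field^'n^'n" assumes "invertible S"
  shows "invertible (matrix_inv S)"
  using minv_l[OF assms] unfolding invertible_def by blast

lemma minv_unique: fixes S :: "'f::field^'n^'n" assumes "S ** R = mat 1"
  shows "matrix_inv S = R"
proof -
  have i: "invertible S" using assms invertible_right_inverse by blast
  have "matrix_inv S = matrix_inv S ** (S ** R)" using assms by simp
  also have "\<dots> = R" by (simp add: matrix_mul_assoc minv_l[OF i])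
  finally show ?thesis .
qed

lemma minv_mult: fixes S R :: "'f::field^'n^'n" assumes "invertible S" "invertible R"
  shows "matrix_inv (S ** R) = matrix_inv R ** matrix_inv S"
proof (rule minv_unique)
  have "S ** R ** (matrix_inv R ** matrix_inv S) = S ** (R ** matrix_inv R) ** matrix_inv S"
    by (simp add: matrix_mul_assoc)
  then show "S ** R ** (matrix_inv R ** matrix_inv S) = mat 1"
    by (simp add: minv_l assms)
qed

lemma cj_mult: assumes "invertible S" shows "cj S (X ** Y) = cj S X ** cj S Y"
proof -
  have "cj S X ** cj S Y = matrix_inv S ** X ** (S ** matrix_inv S) ** Y ** S"
    unfolding cj_def by (simp add: matrix_mul_assoc)
  also have "\<dots> = matrix_inv S ** X ** Y ** S" by (simp add: minv_l[OF assms])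
  finally show ?thesis by (simp add: cj_def matrix_mul_assoc)
qed

lemma cj_back: assumes "invertible S" shows "S ** cj S X ** matrix_inv S = X"
proof -
  have "S ** cj S X ** matrix_inv S = (S ** matrix_inv S) ** X ** (S ** matrix_inv S)"
    unfolding cj_def by (simp add: matrix_mul_assoc)
  then show ?thesis by (simp add: minv_l[OF assms])
qed

lemma cj_inj: assumes "invertible S" "cj S X = cj S Y" shows "X = Y"
proof -
  have "X = S ** cj S X ** matrix_inv S" by (simp only: cj_back[OF assms(1)])
  also have "\<dots> = S ** cj S Y ** matrix_inv S" by (simp only: assms(2))
  also have "\<dots> = Y" by (rule cj_back[OF assms(1)])
  finally show ?thesis .
qed

lemma cj_comm: assumes "invertible S"
  shows "(cj S X ** cj S Y = cj S Y ** cj S X) \<longleftrightarrow> X ** Y = Y ** X"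
proof
  assume "cj S X ** cj S Y = cj S Y ** cj S X"
  then have "cj S (X ** Y) = cj S (Y ** X)" by (simp add: cj_mult[OF assms])
  then show "X ** Y = Y ** X" by (rule cj_inj[OF assms])
next
  assume "X ** Y = Y ** X"
  then show "cj S X ** cj S Y = cj S Y ** cj S X" by (simp add: cj_mult[OF assms, symmetric])
qed

lemma cj_comp: assumes "invertible S" "invertible R"
  shows "cj (S ** R) X = cj R (cj S X)"
  unfolding cj_def by (simp add: minv_mult assms matrix_mul_assoc)

lemma cj_invertible: assumes "invertible S" "invertible X" shows "invertible (cj S X)"
  unfolding cj_def by (intro invertible_mult minv_inv assms)

lemma cj_eq: fixes S :: "'f::field^3^3" assumes "invertible S" "M ** S = S ** U"
  shows "cj S M = U"
proof -
  have "cj S M = matrix_inv S ** (M ** S)" unfolding cj_def by (simp add: matrix_mul_assoc)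
  also have "\<dots> = (matrix_inv S ** S) ** U" by (simp add: assms(2) matrix_mul_assoc)
  also have "\<dots> = U" by (simp add: minv_l[OF assms(1)])
  finally show ?thesis .
qed

lemma cj_col: fixes S :: "'f::field^3^3" assumes "invertible S"
  and "M *v (S *v c) = S *v d" shows "cj S M *v c = d"
proof -
  have SU: "S ** cj S M = M ** S"
  proof -
    have "S ** cj S M = (S ** matrix_inv S) ** M ** S" unfolding cj_def by (simp add: matrix_mul_assoc)
    then show ?thesis by (simp add: minv_l[OF assms(1)])
  qed
  have "S *v (cj S M *v c) = (S ** cj S M) *v c" by (simp add: matrix_vector_mul_assoc)
  also have "\<dots> = M *v (S *v c)" by (simp add: SU matrix_vector_mul_assoc)
  finally have "S *v (cj S M *v c) = S *v d" using assms(2) by simp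
  then show ?thesis using inj_matrix_vector_mult[OF assms(1)] by (auto dest: injD)
qed

lemma cm_apply: "cm u v w *v vector [x,y,z] = x *s u + y *s v + z *s w"
  unfolding vec_eq_iff forall_3 by (simp add: matrix_vector_mult_def sum_3 cm_def)

lemma det_cm: "det (cm u v w) = u$1 * v$2 * w$3 + v$1 * w$2 * u$3 + w$1 * u$2 * v$3 - u$1 * w$2 * v$3 - v$1 * u$2 * w$3 - w$1 * v$2 * u$3"
  by (simp add: det_3 cm_def)


lemma flag_lem:
  fixes u v w :: "'f::field^3"
  assumes inv: "invertible (cm u v w)" and hu: "M *v u = a *s u" and hv: "M *v v = b *s u + c *s v"
  shows "UT (cj (cm u v w) M)"
proof -
  have 1: "cj (cm u v w) M *v vector [1,0,0] = vector [a,0,0]"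
    by (rule cj_col[OF inv]) (simp add: cm_apply hu)
  have 2: "cj (cm u v w) M *v vector [0,1,0] = vector [b,c,0]"
    by (rule cj_col[OF inv]) (simp add: cm_apply hv)
  from 1 2 show ?thesis unfolding UT_def by (simp add: msimps)
qed

lemma diag_lem:
  fixes u v w :: "'f::field^3"
  assumes inv: "invertible (cm u v w)" and hu: "M *v u = a *s u" and hv: "M *v v = b *s v"
   and hw: "M *v w = c *s w"
  shows "cj (cm u v w) M = diag3 a b c"
proof -
  have 1: "cj (cm u v w) M *v vector [1,0,0] = vector [a,0,0]"
    by (rule cj_col[OF inv]) (simp add: cm_apply hu)
  have 2: "cj (cm u v w) M *v vector [0,1,0] = vector [0,b,0]"
    by (rule cj_col[OF inv]) (simp add: cm_apply hv)
  have 3: "cj (cm u v w) M *v vector [0,0,1] = vector [0,0,c]"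
    by (rule cj_col[OF inv]) (simp add: cm_apply hw)
  from 1 2 3 show ?thesis by (simp add: msimps)
qed


lemma mm_entry: "(A ** B)$i$j = A$i$1 * B$1$j + A$i$2 * B$2$j + A$i$3 * B$3$j"
  for A B :: "'f::field^3^3"
  by (simp add: matrix_matrix_mult_def sum_3)

lemma GL3_group: "group (GL3 :: ('f::field^3^3) monoid)"
proof (rule groupI)
  show "x \<otimes>\<^bsub>GL3\<^esub> y \<in> carrier GL3" if "x \<in> carrier GL3" "y \<in> carrier GL3" for x y :: "'f^3^3"
    using that by (simp add: GL3_def invertible_mult)
  show "\<one>\<^bsub>GL3\<^esub> \<in> carrier (GL3 :: ('f::field^3^3) monoid)"
    by (simp add: GL3_def invertible_def)
  show "x \<otimes>\<^bsub>GL3\<^esub> y \<otimes>\<^bsub>GL3\<^esub> z = x \<otimes>\<^bsub>GL3\<^esub> (y \<otimes>\<^bsub>GL3\<^esub> z)" for x y z :: "'f^3^3"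
    by (simp add: GL3_def matrix_mul_assoc)
  show "\<one>\<^bsub>GL3\<^esub> \<otimes>\<^bsub>GL3\<^esub> x = x" for x :: "'f^3^3"
    by (simp add: GL3_def)
  show "\<exists>y\<in>carrier GL3. y \<otimes>\<^bsub>GL3\<^esub> x = \<one>\<^bsub>GL3\<^esub>" if "x \<in> carrier GL3" for x :: "'f^3^3"
    using that minv_l[of x] minv_inv[of x] by (auto simp: GL3_def)
qed

lemma GL3_inv: assumes "invertible (X::'f::field^3^3)" shows "inv\<^bsub>GL3\<^esub> X = matrix_inv X"
proof -
  interpret group "GL3 :: ('f::field^3^3) monoid" by (rule GL3_group)
  show ?thesis
    by (rule inv_equality) (use assms minv_l[OF assms] minv_inv[OF assms] in \<open>auto simp: GL3_def\<close>)
qed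

lemma GL3_simps: "carrier GL3 = {M. invertible M}" "mult GL3 = (**)" "one GL3 = mat 1"
  by (simp_all add: GL3_def)

lemma centraliser_subgroup: fixes G :: "('a,'b) monoid_scheme" (structure) assumes "group G" "A \<in> carrier G"
  shows "subgroup (centraliser G A) G"
proof -
  interpret group G by fact
  show ?thesis
  proof (rule subgroupI)
    show "centraliser G A \<subseteq> carrier G" by (auto simp: centraliser_def)
    show "centraliser G A \<noteq> {}" using assms(2) by (auto simp: centraliser_def intro!: exI[of _ \<one>])
    show "inv g \<in> centraliser G A" if "g \<in> centraliser G A" for g
    proof -
      have g: "g \<in> carrier G" "g \<otimes> A = A \<otimes> g" using that by (auto simp: centraliser_def)
      have "inv g \<otimes> A = inv g \<otimes> A \<otimes> (g \<otimes> inv g)" using g assms by (simp add: m_assoc)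
      also have "\<dots> = inv g \<otimes> (g \<otimes> A) \<otimes> inv g" using g assms by (simp add: m_assoc)
      also have "\<dots> = A \<otimes> inv g" using g(1) assms(2) by (simp add: m_assoc[symmetric])
      finally have "inv g \<otimes> A = A \<otimes> inv g" .
      then show ?thesis using g(1) unfolding centraliser_def by auto
    qed
    show "g \<otimes> h \<in> centraliser G A" if "g \<in> centraliser G A" "h \<in> centraliser G A" for g h
    proof -
      have g: "g \<in> carrier G" "g \<otimes> A = A \<otimes> g" "h \<in> carrier G" "h \<otimes> A = A \<otimes> h"
        using that by (auto simp: centraliser_def)
      have "g \<otimes> h \<otimes> A = g \<otimes> (h \<otimes> A)" using g assms by (simp add: m_assoc)
      also have "\<dots> = g \<otimes> A \<otimes> h" using g(1,3,4) assms by (simp add: m_assoc)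
      also have "\<dots> = A \<otimes> (g \<otimes> h)" using g assms by (simp add: m_assoc[symmetric])
      finally have "g \<otimes> h \<otimes> A = A \<otimes> (g \<otimes> h)" .
      then show ?thesis using g(1,3) unfolding centraliser_def by auto
    qed
  qed
qed

lemma cent_iff: fixes G :: "('a,'b) monoid_scheme" (structure)
  assumes "group G" "A \<in> carrier G" "\<rho> \<in> hom G GL3" "inj_on \<rho> (carrier G)"
  shows "g \<in> centraliser G A \<longleftrightarrow> g \<in> carrier G \<and> \<rho> g ** \<rho> A = \<rho> A ** \<rho> g"
proof -
  interpret group G by fact
  have m: "\<rho> (x \<otimes> y) = \<rho> x ** \<rho> y" if "x \<in> carrier G" "y \<in> carrier G" for x y
    using hom_mult[OF assms(3) that] by (simp add: GL3_def)
  show ?thesis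
  proof
    assume "g \<in> centraliser G A"
    then show "g \<in> carrier G \<and> \<rho> g ** \<rho> A = \<rho> A ** \<rho> g"
      using m assms(2) by (auto simp: centraliser_def) (metis m)
  next
    assume h: "g \<in> carrier G \<and> \<rho> g ** \<rho> A = \<rho> A ** \<rho> g"
    then have "\<rho> (g \<otimes> A) = \<rho> (A \<otimes> g)" using m assms(2) by simp
    then have "g \<otimes> A = A \<otimes> g" using assms(2,4) h by (auto dest: inj_onD)
    then show "g \<in> centraliser G A" using h by (simp add: centraliser_def)
  qed
qed


lemma UT_inv: fixes X Y :: "'f::field^3^3" assumes "Y ** X = mat 1" "UT X"
  shows "UT Y" "Y$1$1 * X$1$1 = 1" "Y$2$2 * X$2$2 = 1" "Y$3$3 * X$3$3 = 1"
    "Y$1$1 * X$1$2 + Y$1$2 * X$2$2 = 0" "Y$2$2 * X$2$3 + Y$2$3 * X$3$3 = 0"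
proof -
  have e: "(Y ** X)$i$j = (if i = j then 1 else 0)" for i j using assms(1) by (simp add: mat_def)
  note e' = e[unfolded mm_entry]
  have x: "X$2$1 = 0" "X$3$1 = 0" "X$3$2 = 0" using assms(2) by (auto simp: UT_def)
  from e'[of 1 1] x show a: "Y$1$1 * X$1$1 = 1" by simp
  then have x1: "X$1$1 \<noteq> 0" by auto
  from e'[of 3 1] x have "Y$3$1 * X$1$1 = 0" by simp
  with x1 have y31: "Y$3$1 = 0" by simp
  from e'[of 2 1] x have "Y$2$1 * X$1$1 = 0" by simp
  with x1 have y21: "Y$2$1 = 0" by simp
  from e'[of 2 2] x y21 show b: "Y$2$2 * X$2$2 = 1" by simp
  then have x2: "X$2$2 \<noteq> 0" by auto
  from e'[of 3 2] x y31 have "Y$3$2 * X$2$2 = 0" by simp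
  with x2 have y32: "Y$3$2 = 0" by simp
  show "UT Y" using y21 y31 y32 by (simp add: UT_def)
  from e'[of 3 3] x y31 y32 show "Y$3$3 * X$3$3 = 1" by simp
  from e'[of 1 2] x show "Y$1$1 * X$1$2 + Y$1$2 * X$2$2 = 0" by simp
  from e'[of 2 3] x y21 show "Y$2$2 * X$2$3 + Y$2$3 * X$3$3 = 0" by simp
qed

definition U0 :: "('f::field^3^3) set" where "U0 = {X. invertible X \<and> UT X}"
definition U1 :: "('f::field^3^3) set" where
  "U1 = {X \<in> U0. X$1$1 = 1 \<and> X$2$2 = 1 \<and> X$3$3 = 1}"
definition U2 :: "('f::field^3^3) set" where
  "U2 = {X \<in> U1. X$1$2 = 0 \<and> X$2$3 = 0}"

lemma U0_diag: assumes "X \<in> U0" shows "X$1$1 \<noteq> 0" "X$2$2 \<noteq> 0" "X$3$3 \<noteq> 0"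
proof -
  have i: "invertible X" "UT X" using assms by (auto simp: U0_def)
  note u = UT_inv[OF minv_l(1)[OF i(1)] i(2)]
  from u(2) show "X$1$1 \<noteq> 0" by auto
  from u(3) show "X$2$2 \<noteq> 0" by auto
  from u(4) show "X$3$3 \<noteq> 0" by auto
qed

lemma GL3_subgroupI:
  assumes "S \<subseteq> {X::'f::field^3^3. invertible X}" "mat 1 \<in> S"
    "\<And>X. X \<in> S \<Longrightarrow> matrix_inv X \<in> S" "\<And>X Y. X \<in> S \<Longrightarrow> Y \<in> S \<Longrightarrow> X ** Y \<in> S"
  shows "subgroup S GL3"
proof -
  interpret group "GL3 :: ('f::field^3^3) monoid" by (rule GL3_group)
  show ?thesis
  proof (rule subgroupI)
    show "S \<subseteq> carrier GL3" using assms(1) by (simp add: GL3_simps)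
    show "S \<noteq> {}" using assms(2) by auto
    show "inv\<^bsub>GL3\<^esub> a \<in> S" if "a \<in> S" for a
      using that assms(1,3) GL3_inv[of a] by auto
    show "a \<otimes>\<^bsub>GL3\<^esub> b \<in> S" if "a \<in> S" "b \<in> S" for a b
      using that assms(4) by (simp add: GL3_simps)
  qed
qed

lemma inv_mat1: "invertible (mat 1 :: 'f::field^3^3)"
  unfolding invertible_def by (rule exI[of _ "mat 1"]) simp

lemma UT_mult: assumes "UT X" "UT Y" shows "UT (X ** Y)"
  using assms by (simp add: UT_def mm_entry)

lemma U0_subgroup: "subgroup (U0 :: ('f::field^3^3) set) GL3"
proof (rule GL3_subgroupI)
  show "U0 \<subseteq> {X::'f^3^3. invertible X}" by (auto simp: U0_def)
  show "mat 1 \<in> (U0 :: ('f::field^3^3) set)" using inv_mat1 by (simp add: U0_def UT_def mat_def)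
  show "matrix_inv X \<in> U0" if "X \<in> U0" for X :: "'f^3^3"
    using that UT_inv(1)[OF minv_l(1)] minv_inv by (auto simp: U0_def)
  show "X ** Y \<in> U0" if "X \<in> U0" "Y \<in> U0" for X Y :: "'f^3^3"
    using that UT_mult invertible_mult by (auto simp: U0_def)
qed

lemma U1_subgroup: "subgroup (U1 :: ('f::field^3^3) set) GL3"
proof (rule GL3_subgroupI)
  show "U1 \<subseteq> {X::'f^3^3. invertible X}" by (auto simp: U1_def U0_def)
  show "mat 1 \<in> (U1 :: ('f::field^3^3) set)" using inv_mat1 by (simp add: U1_def U0_def UT_def mat_def)
  show "matrix_inv X \<in> U1" if "X \<in> U1" for X :: "'f^3^3"
  proof -
    have i: "invertible X" "UT X" "X$1$1 = 1" "X$2$2 = 1" "X$3$3 = 1" using that by (auto simp: U1_def U0_def)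
    note u = UT_inv[OF minv_l(1)[OF i(1)] i(2)]
    show ?thesis using u i minv_inv[OF i(1)] by (simp add: U1_def U0_def)
  qed
  show "X ** Y \<in> U1" if "X \<in> U1" "Y \<in> U1" for X Y :: "'f^3^3"
    using that UT_mult invertible_mult by (auto simp: U1_def U0_def mm_entry UT_def)
qed

lemma U2_subgroup: "subgroup (U2 :: ('f::field^3^3) set) GL3"
proof (rule GL3_subgroupI)
  show "U2 \<subseteq> {X::'f^3^3. invertible X}" by (auto simp: U2_def U1_def U0_def)
  show "mat 1 \<in> (U2 :: ('f::field^3^3) set)" using inv_mat1 by (simp add: U2_def U1_def U0_def UT_def mat_def)
  show "matrix_inv X \<in> U2" if "X \<in> U2" for X :: "'f^3^3"
  proof -
    have i: "invertible X" "UT X" "X$1$1 = 1" "X$2$2 = 1" "X$3$3 = 1" "X$1$2 = 0" "X$2$3 = 0"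
      using that by (auto simp: U2_def U1_def U0_def)
    note u = UT_inv[OF minv_l(1)[OF i(1)] i(2)]
    show ?thesis using u i minv_inv[OF i(1)] by (simp add: U2_def U1_def U0_def)
  qed
  show "X ** Y \<in> U2" if "X \<in> U2" "Y \<in> U2" for X Y :: "'f^3^3"
    using that UT_mult invertible_mult by (auto simp: U2_def U1_def U0_def mm_entry UT_def)
qed


lemma der_sub:
  assumes "subgroup K (GL3 :: ('f::field^3^3) monoid)" "H \<subseteq> {X. invertible X}"
    "\<And>x y. x \<in> H \<Longrightarrow> y \<in> H \<Longrightarrow> x ** y ** matrix_inv x ** matrix_inv y \<in> K"
  shows "derived GL3 H \<subseteq> K"
proof -
  interpret group "GL3 :: ('f::field^3^3) monoid" by (rule GL3_group)
  show ?thesis unfolding derived_def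
  proof (rule generate_subgroup_incl[OF _ assms(1)])
    show "derived_set GL3 H \<subseteq> K"
    proof (clarify)
      fix x y assume "x \<in> H" "y \<in> H"
      show "x \<otimes>\<^bsub>GL3\<^esub> y \<otimes>\<^bsub>GL3\<^esub> inv\<^bsub>GL3\<^esub> x \<otimes>\<^bsub>GL3\<^esub> inv\<^bsub>GL3\<^esub> y \<in> K"
      proof -
        have "invertible x" "invertible y" using \<open>x \<in> H\<close> \<open>y \<in> H\<close> assms(2) by auto
        then show ?thesis using assms(3)[OF \<open>x \<in> H\<close> \<open>y \<in> H\<close>] by (simp add: GL3_inv GL3_simps)
      qed
    qed
  qed
qed

lemma comm_eq: fixes x y :: "'f::field^3^3" assumes "invertible x" "invertible y"
  shows "(x ** y ** matrix_inv x ** matrix_inv y) ** (y ** x) = x ** y"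
proof -
  have "(x ** y ** matrix_inv x ** matrix_inv y) ** (y ** x) = x ** y ** (matrix_inv x ** ((matrix_inv y ** y) ** x))"
    by (simp add: matrix_mul_assoc)
  also have "\<dots> = x ** y" by (simp add: minv_l assms)
  finally show ?thesis .
qed

lemma U0_closed: assumes "x \<in> U0" "y \<in> U0"
  shows "x ** y ** matrix_inv x ** matrix_inv y \<in> U0"
proof -
  have i: "invertible x" "UT x" "invertible y" "UT y" using assms by (auto simp: U0_def)
  have "UT (matrix_inv x)" "UT (matrix_inv y)"
    using UT_inv(1)[OF minv_l(1)] i by auto
  then show ?thesis using i by (auto simp: U0_def intro!: UT_mult invertible_mult minv_inv)
qed

lemma comm_U0: assumes "x \<in> U0" "y \<in> U0"
  shows "x ** y ** matrix_inv x ** matrix_inv y \<in> U1"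
proof -
  define c where "c = x ** y ** matrix_inv x ** matrix_inv y"
  have c0: "c \<in> U0" unfolding c_def by (rule U0_closed[OF assms])
  have i: "invertible x" "invertible y" using assms by (auto simp: U0_def)
  have eq: "c ** (y ** x) = x ** y" unfolding c_def by (rule comm_eq[OF i])
  have u: "UT c" "UT x" "UT y" using assms c0 by (auto simp: U0_def)
  have z: "c$2$1 = 0" "c$3$1 = 0" "c$3$2 = 0" "x$2$1 = 0" "x$3$1 = 0" "x$3$2 = 0"
     "y$2$1 = 0" "y$3$1 = 0" "y$3$2 = 0" using u by (auto simp: UT_def)
  have nz: "x$1$1 \<noteq> 0" "x$2$2 \<noteq> 0" "x$3$3 \<noteq> 0" "y$1$1 \<noteq> 0" "y$2$2 \<noteq> 0" "y$3$3 \<noteq> 0"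
    using U0_diag assms by auto
  have e: "(c ** (y ** x))$i$j = (x ** y)$i$j" for i j using eq by simp
  from e[of 1 1] z have "c$1$1 * (y$1$1 * x$1$1) = x$1$1 * y$1$1" by (simp add: mm_entry)
  with nz have 1: "c$1$1 = 1" by (simp add: mult.commute)
  from e[of 2 2] z have "c$2$2 * (y$2$2 * x$2$2) = x$2$2 * y$2$2" by (simp add: mm_entry)
  with nz have 2: "c$2$2 = 1" by (simp add: mult.commute)
  from e[of 3 3] z have "c$3$3 * (y$3$3 * x$3$3) = x$3$3 * y$3$3" by (simp add: mm_entry)
  with nz have 3: "c$3$3 = 1" by (simp add: mult.commute)
  show ?thesis using c0 1 2 3 unfolding c_def[symmetric] by (simp add: U1_def)
qed

lemma comm_U1: assumes "x \<in> U1" "y \<in> U1"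
  shows "x ** y ** matrix_inv x ** matrix_inv y \<in> U2"
proof -
  define c where "c = x ** y ** matrix_inv x ** matrix_inv y"
  have c1: "c \<in> U1" unfolding c_def using U1_subgroup assms
    by (metis (no_types, lifting) GL3_inv GL3_simps(2) mem_Collect_eq subgroup.m_closed subgroup.m_inv_closed U1_def U0_def)
  have i: "invertible x" "invertible y" using assms by (auto simp: U1_def U0_def)
  have eq: "c ** (y ** x) = x ** y" unfolding c_def by (rule comm_eq[OF i])
  have z: "c$2$1 = 0" "c$3$1 = 0" "c$3$2 = 0" "x$2$1 = 0" "x$3$1 = 0" "x$3$2 = 0"
     "y$2$1 = 0" "y$3$1 = 0" "y$3$2 = 0"
     "c$1$1 = 1" "c$2$2 = 1" "c$3$3 = 1" "x$1$1 = 1" "x$2$2 = 1" "x$3$3 = 1"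
     "y$1$1 = 1" "y$2$2 = 1" "y$3$3 = 1"
    using assms c1 by (auto simp: U1_def U0_def UT_def)
  have e: "(c ** (y ** x))$i$j = (x ** y)$i$j" for i j using eq by simp
  from e[of 1 2] z have 1: "c$1$2 = 0" by (simp add: mm_entry)
  from e[of 2 3] z have 2: "c$2$3 = 0" by (simp add: mm_entry)
  show ?thesis using c1 1 2 unfolding c_def[symmetric] by (simp add: U2_def)
qed

lemma comm_U2: assumes "x \<in> U2" "y \<in> U2"
  shows "x ** y ** matrix_inv x ** matrix_inv y \<in> {mat 1}"
proof -
  define c where "c = x ** y ** matrix_inv x ** matrix_inv y"
  have c1: "c \<in> U2" unfolding c_def using U2_subgroup assms
    by (metis (no_types, lifting) GL3_inv GL3_simps(2) mem_Collect_eq subgroup.m_closed subgroup.m_inv_closed U2_def U1_def U0_def)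
  have i: "invertible x" "invertible y" using assms by (auto simp: U2_def U1_def U0_def)
  have eq: "c ** (y ** x) = x ** y" unfolding c_def by (rule comm_eq[OF i])
  have z: "c$2$1 = 0" "c$3$1 = 0" "c$3$2 = 0" "x$2$1 = 0" "x$3$1 = 0" "x$3$2 = 0"
     "y$2$1 = 0" "y$3$1 = 0" "y$3$2 = 0"
     "c$1$1 = 1" "c$2$2 = 1" "c$3$3 = 1" "x$1$1 = 1" "x$2$2 = 1" "x$3$3 = 1"
     "y$1$1 = 1" "y$2$2 = 1" "y$3$3 = 1" "c$1$2 = 0" "c$2$3 = 0" "x$1$2 = 0" "x$2$3 = 0"
     "y$1$2 = 0" "y$2$3 = 0"
    using assms c1 by (auto simp: U2_def U1_def U0_def UT_def)
  have e: "(c ** (y ** x))$i$j = (x ** y)$i$j" for i j using eq by simp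
  from e[of 1 3] z have 1: "c$1$3 = 0" by (simp add: mm_entry)
  have "c = mat 1" using z 1 by (simp add: vec_eq_iff forall_3 mat_def)
  then show ?thesis unfolding c_def by simp
qed


lemma derived3_trivial:
  assumes "H \<subseteq> (U0 :: ('f::field^3^3) set)"
  shows "(derived GL3 ^^ 3) H \<subseteq> {mat 1}"
proof -
  interpret group "GL3 :: ('f::field^3^3) monoid" by (rule GL3_group)
  have d1: "derived GL3 H \<subseteq> U1"
    by (rule der_sub[OF U1_subgroup]) (use assms comm_U0 in \<open>auto simp: U0_def\<close>)
  have d2: "derived GL3 (derived GL3 H) \<subseteq> U2"
    by (rule der_sub[OF U2_subgroup]) (use d1 comm_U1 in \<open>auto simp: U1_def U0_def\<close>)
  have t: "subgroup {mat 1} (GL3 :: ('f::field^3^3) monoid)"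
    using triv_subgroup by (simp add: GL3_simps)
  have d3: "derived GL3 (derived GL3 (derived GL3 H)) \<subseteq> {mat 1}"
    by (rule der_sub[OF t]) (use d2 comm_U2 in \<open>auto simp: U2_def U1_def U0_def\<close>)
  then show ?thesis by (simp add: numeral_3_eq_3)
qed

lemma solv:
  fixes G :: "('a,'b) monoid_scheme" (structure)
  assumes "group G" "A \<in> carrier G" "\<rho> \<in> hom G (GL3 :: ('f::field^3^3) monoid)"
    "inj_on \<rho> (carrier G)" "invertible P"
    "\<forall>g\<in>centraliser G A. UT (cj P (\<rho> g))"
  shows "solvable (G\<lparr>carrier := centraliser G A\<rparr>)"
proof -
  interpret G: group G by fact
  interpret GL: group "GL3 :: ('f::field^3^3) monoid" by (rule GL3_group)
  define C where "C = centraliser G A"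
  define G' where "G' = G\<lparr>carrier := C\<rparr>"
  have sub: "subgroup C G" unfolding C_def by (rule centraliser_subgroup[OF assms(1,2)])
  have gG': "group G'" unfolding G'_def by (rule G.subgroup_imp_group[OF sub])
  define h where "h g = cj P (\<rho> g)" for g
  have rinv: "invertible (\<rho> g)" if "g \<in> carrier G" for g
    using hom_in_carrier[OF assms(3) that] by (simp add: GL3_simps)
  have rmul: "\<rho> (x \<otimes> y) = \<rho> x ** \<rho> y" if "x \<in> carrier G" "y \<in> carrier G" for x y
    using hom_mult[OF assms(3) that] by (simp add: GL3_simps)
  have Csub: "C \<subseteq> carrier G" using sub subgroup.subset by blast
  have hom: "h \<in> hom G' GL3"
  proof (rule homI)
    fix x assume "x \<in> carrier G'"
    then show "h x \<in> carrier GL3" using Csub rinv cj_invertible[OF assms(5)]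
      by (auto simp: G'_def h_def GL3_simps)
  next
    fix x y assume "x \<in> carrier G'" "y \<in> carrier G'"
    then have "x \<in> carrier G" "y \<in> carrier G" using Csub by (auto simp: G'_def)
    then show "h (x \<otimes>\<^bsub>G'\<^esub> y) = h x \<otimes>\<^bsub>GL3\<^esub> h y"
      by (simp add: G'_def h_def GL3_simps rmul cj_mult[OF assms(5)])
  qed
  have gh: "group_hom G' GL3 h"
    using gG' GL.is_group hom by (simp add: group_hom_def group_hom_axioms_def)
  have inj: "inj_on h C"
  proof
    fix x y assume "x \<in> C" "y \<in> C" "h x = h y"
    then have "\<rho> x = \<rho> y" using cj_inj[OF assms(5)] by (simp add: h_def)
    then show "x = y" using assms(4) \<open>x \<in> C\<close> \<open>y \<in> C\<close> Csub by (auto dest: inj_onD)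
  qed
  have img_sub: "subgroup (h ` C) GL3"
    using group_hom.img_is_subgroup[OF gh] by (simp add: G'_def)
  have imgU0: "h ` C \<subseteq> U0"
    using assms(6) Csub rinv cj_invertible[OF assms(5)] by (auto simp: C_def h_def U0_def)
  have "(derived GL3 ^^ 3) (h ` C) = {\<one>\<^bsub>GL3\<^esub>}"
  proof
    show "(derived GL3 ^^ 3) (h ` C) \<subseteq> {\<one>\<^bsub>GL3\<^esub>}"
      using derived3_trivial[OF imgU0] by (simp add: GL3_simps)
    show "{\<one>\<^bsub>GL3\<^esub>} \<subseteq> (derived GL3 ^^ 3) (h ` C)"
      using subgroup.one_closed[OF GL.exp_of_derived_is_subgroup[OF img_sub]] by blast
  qed
  then have "solvable_seq GL3 (h ` C)"
    by (rule GL.trivial_derived_seq_imp_solvable[OF img_sub])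
  then have "solvable_seq G' C"
    using group_hom.solvable_img_imp_solvable[OF gh _ inj] group.subgroup_self[OF gG']
    by (simp add: G'_def)
  then show ?thesis by (simp add: solvable_def G'_def C_def)
qed



lemma comm_eqs: fixes X T :: "'f::field^3^3" assumes "X ** T = T ** X" "UT T"
  shows
  "X$3$1 * T$1$1 = T$3$3 * X$3$1"
  "X$2$1 * T$1$1 = T$2$2 * X$2$1 + T$2$3 * X$3$1"
  "T$1$2 * X$2$1 + T$1$3 * X$3$1 = 0"
  "X$3$1 * T$1$2 + X$3$2 * T$2$2 = T$3$3 * X$3$2"
  "X$2$1 * T$1$2 = T$2$3 * X$3$2"
  "X$1$1 * T$1$2 + X$1$2 * T$2$2 = T$1$1 * X$1$2 + T$1$2 * X$2$2 + T$1$3 * X$3$2"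
  "X$3$1 * T$1$3 + X$3$2 * T$2$3 = 0"
  "X$2$1 * T$1$3 + X$2$2 * T$2$3 + X$2$3 * T$3$3 = T$2$2 * X$2$3 + T$2$3 * X$3$3"
  "X$1$1 * T$1$3 + X$1$2 * T$2$3 + X$1$3 * T$3$3 = T$1$1 * X$1$3 + T$1$2 * X$2$3 + T$1$3 * X$3$3"
proof -
  have e: "(X ** T)$i$j = (T ** X)$i$j" for i j using assms(1) by simp
  have z: "T$2$1 = 0" "T$3$1 = 0" "T$3$2 = 0" using assms(2) by (auto simp: UT_def)
  show "X$3$1 * T$1$1 = T$3$3 * X$3$1" using e[of 3 1] z by (simp add: mm_entry)
  show "X$2$1 * T$1$1 = T$2$2 * X$2$1 + T$2$3 * X$3$1" using e[of 2 1] z by (simp add: mm_entry)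
  show "T$1$2 * X$2$1 + T$1$3 * X$3$1 = 0" using e[of 1 1] z by (simp add: mm_entry algebra_simps)
  show "X$3$1 * T$1$2 + X$3$2 * T$2$2 = T$3$3 * X$3$2" using e[of 3 2] z by (simp add: mm_entry)
  show "X$2$1 * T$1$2 = T$2$3 * X$3$2" using e[of 2 2] z by (simp add: mm_entry algebra_simps)
  show "X$1$1 * T$1$2 + X$1$2 * T$2$2 = T$1$1 * X$1$2 + T$1$2 * X$2$2 + T$1$3 * X$3$2"
    using e[of 1 2] z by (simp add: mm_entry)
  show "X$3$1 * T$1$3 + X$3$2 * T$2$3 = 0" using e[of 3 3] z by (simp add: mm_entry algebra_simps)
  show "X$2$1 * T$1$3 + X$2$2 * T$2$3 + X$2$3 * T$3$3 = T$2$2 * X$2$3 + T$2$3 * X$3$3"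
    using e[of 2 3] z by (simp add: mm_entry)
  show "X$1$1 * T$1$3 + X$1$2 * T$2$3 + X$1$3 * T$3$3 = T$1$1 * X$1$3 + T$1$2 * X$2$3 + T$1$3 * X$3$3"
    using e[of 1 3] z by (simp add: mm_entry)
qed

lemma minv_mat1: "matrix_inv (mat 1 :: 'f::field^3^3) = mat 1"
  by (rule minv_unique) simp

lemma cj_mat1: "cj (mat 1) X = (X :: 'f::field^3^3)"
  by (simp add: cj_def minv_mat1)

lemma std_bad: "X$2$1 = 0 \<Longrightarrow> X$3$1 = 0 \<Longrightarrow> X$3$2 = 0 \<Longrightarrow> UT (cj (mat 1) (X :: 'f::field^3^3))"
  by (simp add: cj_mat1 UT_def)

lemma cm_invertible: "det (cm u v w) \<noteq> 0 \<Longrightarrow> invertible (cm u v w)"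
  by (simp add: invertible_det_nz)

lemma canc: "(x::'f::field) * a = c * x \<Longrightarrow> a \<noteq> c \<Longrightarrow> x = 0"
  by (metis mult.commute mult_left_cancel)

lemma canc0: "(x::'f::field) * a = 0 \<Longrightarrow> a \<noteq> 0 \<Longrightarrow> x = 0"
  by simp

lemma caseI: fixes T :: "'f::field^3^3"
  assumes "UT T" "T$1$1 \<noteq> T$2$2" "T$1$1 \<noteq> T$3$3" "T$2$2 \<noteq> T$3$3"
  shows "\<forall>X. X ** T = T ** X \<longrightarrow> UT (cj (mat 1) X)"
proof (intro allI impI)
  fix X :: "'f^3^3" assume c: "X ** T = T ** X"
  note E = comm_eqs[OF c assms(1)]
  have 31: "X$3$1 = 0" using canc[OF E(1) assms(3)] .
  have "X$2$1 * T$1$1 = T$2$2 * X$2$1" using E(2) 31 by simp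
  then have 21: "X$2$1 = 0" using canc assms(2) by blast
  have "X$3$2 * T$2$2 = T$3$3 * X$3$2" using E(4) 31 by simp
  then have 32: "X$3$2 = 0" using canc assms(4) by blast
  show "UT (cj (mat 1) X)" by (rule std_bad[OF 21 31 32])
qed


lemma mv3: "(M::'f::field^3^3) *v v = vector [M$1$1 * v$1 + M$1$2 * v$2 + M$1$3 * v$3,
   M$2$1 * v$1 + M$2$2 * v$2 + M$2$3 * v$3, M$3$1 * v$1 + M$3$2 * v$2 + M$3$3 * v$3]"
  by (simp add: vec_eq_iff forall_3 matrix_vector_mult_def sum_3)

lemma vec3_eq: "(vector [a,b,c] :: 'f::field^3) = vector [a',b',c'] \<longleftrightarrow> a = a' \<and> b = b' \<and> c = c'"
  by (simp add: vec_eq_iff forall_3)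

lemma vec3_ops: "k *s (vector [a,b,c] :: 'f::field^3) = vector [k*a, k*b, k*c]"
  "(vector [a,b,c] :: 'f::field^3) + vector [a',b',c'] = vector [a+a', b+b', c+c']"
  by (simp_all add: vec_eq_iff forall_3)

lemma caseII: fixes T :: "'f::field^3^3"
  assumes ut: "UT T" and ab: "T$1$1 = T$2$2" and bc: "T$2$2 = T$3$3"
  shows "(\<forall>X. X ** T = T ** X) \<or> (\<exists>R. invertible R \<and> (\<forall>X. X ** T = T ** X \<longrightarrow> UT (cj R X)))"
proof -
  have z: "T$2$1 = 0" "T$3$1 = 0" "T$3$2 = 0" using ut by (auto simp: UT_def)
  show ?thesis
  proof (cases "T$2$3 = 0")
    case False
    note r = False
    have base: "X$3$1 = 0 \<and> X$3$2 = 0 \<and> X$2$1 * T$1$2 = 0" if c: "X ** T = T ** X" for X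
    proof -
      note E = comm_eqs[OF c ut]
      have "T$2$3 * X$3$1 = 0" using E(2) ab by simp
      then have 31: "X$3$1 = 0" using r by simp
      have "X$3$2 * T$2$3 = 0" using E(7) 31 by simp
      then have 32: "X$3$2 = 0" using r by simp
      show ?thesis using E(5) 31 32 by simp
    qed
    show ?thesis
    proof (cases "T$1$2 = 0")
      case False
      have "\<forall>X. X ** T = T ** X \<longrightarrow> UT (cj (mat 1) X)"
        using base False by (auto intro!: std_bad)
      then show ?thesis using inv_mat1 by blast
    next
      case True
      note p = True
      define u :: "'f^3" where "u = vector [T$1$3, T$2$3, 0]"
      define R where "R = cm u (vector [1,0,0]) (vector [0,0,1])"
      have iR: "invertible R" unfolding R_def
        by (rule cm_invertible) (simp add: det_cm u_def r)
      have "UT (cj R X)" if c: "X ** T = T ** X" for X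
        unfolding R_def
      proof (rule flag_lem)
        show "invertible (cm u (vector [1, 0, 0]) (vector [0, 0, 1]))" using iR R_def by simp
        note E = comm_eqs[OF c ut]
        have b: "X$3$1 = 0" "X$3$2 = 0" using base[OF c] by auto
        show "X *v u = X$3$3 *s u"
          using E(8) E(9) b ab bc p by (simp add: mv3 u_def vec3_ops vec3_eq algebra_simps)
        show "X *v vector [1, 0, 0] = (X$2$1 / T$2$3) *s u + (X$1$1 - X$2$1 * T$1$3 / T$2$3) *s vector [1, 0, 0]"
          using b r by (simp add: mv3 u_def vec3_ops vec3_eq field_simps)
      qed
      then show ?thesis using iR by blast
    qed
  next
    case True
    note r = True
    show ?thesis
    proof (cases "T$1$2 = 0")
      case False
      note p = False
      define v :: "'f^3" where "v = vector [0, T$1$3, - T$1$2]"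
      define R where "R = cm (vector [1,0,0]) v (vector [0,1,0])"
      have iR: "invertible R" unfolding R_def
        by (rule cm_invertible) (simp add: det_cm v_def p)
      have "UT (cj R X)" if c: "X ** T = T ** X" for X
        unfolding R_def
      proof (rule flag_lem)
        show "invertible (cm (vector [1,0,0]) v (vector [0, 1, 0]))" using iR R_def by simp
        note E = comm_eqs[OF c ut]
        have 31: "X$3$1 = 0" using E(4) ab bc p by simp
        have 21: "X$2$1 = 0" using E(3) 31 p by simp
        show "X *v vector [1,0,0] = X$1$1 *s vector [1,0,0]"
          using 31 21 by (simp add: mv3 vec3_ops vec3_eq)
        have e6: "T$1$2 * X$1$1 = T$1$2 * X$2$2 + T$1$3 * X$3$2"
          using E(6) ab by (simp add: algebra_simps)
        have e9: "T$1$3 * X$1$1 = T$1$2 * X$2$3 + T$1$3 * X$3$3"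
          using E(9) ab bc r by (simp add: algebra_simps)
        have key: "T$1$2 * (X$2$2 * T$1$3 - X$2$3 * T$1$2) = T$1$3 * (X$3$3 * T$1$2 - X$3$2 * T$1$3)"
        proof -
          have "T$1$2 * (X$2$2 * T$1$3 - X$2$3 * T$1$2) = T$1$3 * (T$1$2 * X$2$2) - T$1$2 * (T$1$2 * X$2$3)"
            by (simp add: algebra_simps)
          also have "\<dots> = T$1$3 * (T$1$2 * X$1$1 - T$1$3 * X$3$2) - T$1$2 * (T$1$3 * X$1$1 - T$1$3 * X$3$3)"
            using e6 e9 by (simp add: algebra_simps)
          also have "\<dots> = T$1$3 * (X$3$3 * T$1$2 - X$3$2 * T$1$3)" by (simp add: algebra_simps)
          finally show ?thesis .
        qed
        show "X *v v = (X$1$2 * T$1$3 - X$1$3 * T$1$2) *s vector [1,0,0]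
            + ((X$3$3 * T$1$2 - X$3$2 * T$1$3) / T$1$2) *s v"
          using key p by (simp add: mv3 v_def vec3_ops vec3_eq field_simps)
      qed
      then show ?thesis using iR by blast
    next
      case True
      note p = True
      show ?thesis
      proof (cases "T$1$3 = 0")
        case True
        have "X ** T = T ** X" for X
          using z r p True ab bc by (simp add: vec_eq_iff forall_3 mm_entry)
        then show ?thesis by blast
      next
        case False
        have "UT (cj (mat 1) X)" if c: "X ** T = T ** X" for X
        proof (rule std_bad)
          note E = comm_eqs[OF c ut]
          show 31: "X$3$1 = 0" using E(3) p False by simp
          show "X$2$1 = 0" using E(8) r False bc by simp
          show "X$3$2 = 0" using E(6) p ab False by simp
        qed
        then show ?thesis using inv_mat1 by blast
      qed
    qed
  qed
qed



lemma diag_comm: fixes X :: "'f::field^3^3" assumes "s \<noteq> e"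
  shows "(X ** diag3 s s e = diag3 s s e ** X) \<longleftrightarrow> (X$1$3 = 0 \<and> X$2$3 = 0 \<and> X$3$1 = 0 \<and> X$3$2 = 0)"
proof
  assume h: "X ** diag3 s s e = diag3 s s e ** X"
  have e: "(X ** diag3 s s e)$i$j = (diag3 s s e ** X)$i$j" for i j using h by simp
  have "X$1$3 * e = s * X$1$3" using e[of 1 3] by (simp add: mm_entry diag3_def)
  then have 1: "X$1$3 = 0" using canc assms by metis
  have "X$2$3 * e = s * X$2$3" using e[of 2 3] by (simp add: mm_entry diag3_def)
  then have 2: "X$2$3 = 0" using canc assms by metis
  have "X$3$1 * s = e * X$3$1" using e[of 3 1] by (simp add: mm_entry diag3_def)
  then have 3: "X$3$1 = 0" using canc assms by metis
  have "X$3$2 * s = e * X$3$2" using e[of 3 2] by (simp add: mm_entry diag3_def)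
  then have 4: "X$3$2 = 0" using canc assms by metis
  show "X$1$3 = 0 \<and> X$2$3 = 0 \<and> X$3$1 = 0 \<and> X$3$2 = 0" using 1 2 3 4 by simp
next
  assume "X$1$3 = 0 \<and> X$2$3 = 0 \<and> X$3$1 = 0 \<and> X$3$2 = 0"
  then show "X ** diag3 s s e = diag3 s s e ** X"
    by (simp add: vec_eq_iff forall_3 mm_entry diag3_def mult.commute)
qed

lemma IIIa_bad: fixes T :: "'f::field^3^3"
  assumes ut: "UT T" and ab: "T$1$1 = T$2$2" and bc: "T$2$2 \<noteq> T$3$3" and p: "T$1$2 \<noteq> 0"
  shows "\<forall>X. X ** T = T ** X \<longrightarrow> UT (cj (mat 1) X)"
proof (intro allI impI)
  fix X :: "'f^3^3" assume c: "X ** T = T ** X"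
  note E = comm_eqs[OF c ut]
  have 31: "X$3$1 = 0" using canc[OF E(1)] ab bc by simp
  have "X$3$2 * T$2$2 = T$3$3 * X$3$2" using E(4) 31 by simp
  then have 32: "X$3$2 = 0" using canc bc by blast
  have 21: "X$2$1 = 0" using E(3) 31 p by simp
  show "UT (cj (mat 1) X)" by (rule std_bad[OF 21 31 32])
qed

lemma IIIa_good: fixes T :: "'f::field^3^3"
  assumes ut: "UT T" and ab: "T$1$1 = T$2$2" and bc: "T$2$2 \<noteq> T$3$3" and p: "T$1$2 = 0"
  shows "\<exists>R. invertible R \<and> cj R T = diag3 (T$1$1) (T$1$1) (T$3$3)"
proof -
  have z: "T$2$1 = 0" "T$3$1 = 0" "T$3$2 = 0" using ut by (auto simp: UT_def)
  define R where "R = cm (vector [1,0,0]) (vector [0,1,0]) (vector [T$1$3, T$2$3, T$3$3 - T$1$1])"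
  have iR: "invertible R" unfolding R_def
    by (rule cm_invertible) (use ab bc in \<open>simp add: det_cm\<close>)
  have "cj R T = diag3 (T$1$1) (T$1$1) (T$3$3)" unfolding R_def
    by (rule diag_lem) (use iR z ab p in \<open>simp_all add: R_def mv3 vec3_ops vec3_eq algebra_simps\<close>)
  then show ?thesis using iR by blast
qed

lemma IIIb: fixes T :: "'f::field^3^3"
  assumes ut: "UT T" and bc: "T$2$2 = T$3$3" and ab: "T$1$1 \<noteq> T$2$2"
  shows "(\<exists>R. invertible R \<and> (\<forall>X. X ** T = T ** X \<longrightarrow> UT (cj R X))) \<or>
         (\<exists>R. invertible R \<and> cj R T = diag3 (T$2$2) (T$2$2) (T$1$1))"
proof -
  have z: "T$2$1 = 0" "T$3$1 = 0" "T$3$2 = 0" using ut by (auto simp: UT_def)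
  show ?thesis
  proof (cases "T$2$3 = 0")
    case False
    have "UT (cj (mat 1) X)" if c: "X ** T = T ** X" for X
    proof (rule std_bad)
      note E = comm_eqs[OF c ut]
      show 31: "X$3$1 = 0" using canc[OF E(1)] ab bc by simp
      have "X$2$1 * T$1$1 = T$2$2 * X$2$1" using E(2) 31 by simp
      then show 21: "X$2$1 = 0" using canc ab by blast
      show "X$3$2 = 0" using E(5) 21 False by simp
    qed
    then show ?thesis using inv_mat1 by blast
  next
    case True
    define R where "R = cm (vector [T$1$2, T$2$2 - T$1$1, 0]) (vector [T$1$3, 0, T$2$2 - T$1$1]) (vector [1,0,0])"
    have iR: "invertible R" unfolding R_def
      by (rule cm_invertible) (use ab in \<open>simp add: det_cm\<close>)
    have "cj R T = diag3 (T$2$2) (T$2$2) (T$1$1)" unfolding R_def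
      by (rule diag_lem) (use iR z ab bc True in \<open>simp_all add: R_def mv3 vec3_ops vec3_eq algebra_simps\<close>)
    then show ?thesis using iR by blast
  qed
qed

lemma IIIc: fixes T :: "'f::field^3^3"
  assumes ut: "UT T" and ac: "T$1$1 = T$3$3" and ab: "T$1$1 \<noteq> T$2$2"
  shows "(\<exists>R. invertible R \<and> (\<forall>X. X ** T = T ** X \<longrightarrow> UT (cj R X))) \<or>
         (\<exists>R. invertible R \<and> cj R T = diag3 (T$1$1) (T$1$1) (T$2$2))"
proof -
  have z: "T$2$1 = 0" "T$3$1 = 0" "T$3$2 = 0" using ut by (auto simp: UT_def)
  show ?thesis
  proof (cases "T$1$2 * T$2$3 + T$1$3 * (T$1$1 - T$2$2) = 0")
    case False
    have "UT (cj (mat 1) X)" if c: "X ** T = T ** X" for X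
    proof (rule std_bad)
      note E = comm_eqs[OF c ut]
      have e2: "(T$1$1 - T$2$2) * X$2$1 = T$2$3 * X$3$1" using E(2) by (simp add: algebra_simps)
      have "(T$1$2 * T$2$3 + T$1$3 * (T$1$1 - T$2$2)) * X$3$1
          = T$1$2 * ((T$1$1 - T$2$2) * X$2$1) + T$1$3 * (T$1$1 - T$2$2) * X$3$1"
        using e2 by (simp add: algebra_simps)
      also have "\<dots> = (T$1$1 - T$2$2) * (T$1$2 * X$2$1 + T$1$3 * X$3$1)" by (simp add: algebra_simps)
      also have "\<dots> = 0" using E(3) by simp
      finally show 31: "X$3$1 = 0" using False by simp
      show "X$2$1 = 0" using e2 31 ab by simp
      have "X$3$2 * T$2$2 = T$1$1 * X$3$2" using E(4) 31 ac by simp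
      then show "X$3$2 = 0" using canc ab by metis
    qed
    then show ?thesis using inv_mat1 by blast
  next
    case True
    define R where "R = cm (vector [1,0,0]) (vector [0, - T$2$3, T$2$2 - T$1$1]) (vector [T$1$2, T$2$2 - T$1$1, 0])"
    have iR: "invertible R" unfolding R_def
      by (rule cm_invertible) (use ab in \<open>simp add: det_cm\<close>)
    have "cj R T = diag3 (T$1$1) (T$1$1) (T$2$2)" unfolding R_def
    proof (rule diag_lem)
      show "invertible (cm (vector [1,0,0]) (vector [0, - T$2$3, T$2$2 - T$1$1]) (vector [T$1$2, T$2$2 - T$1$1, 0]))"
        using iR R_def by simp
      show "T *v vector [1,0,0] = T$1$1 *s vector [1,0,0]" using z by (simp add: mv3 vec3_ops vec3_eq)
      have t: "T$1$3 * T$2$2 - T$1$2 * T$2$3 = T$1$3 * T$1$1"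
        using True by (simp add: algebra_simps)
      show "T *v vector [0, - T$2$3, T$2$2 - T$1$1] = T$1$1 *s vector [0, - T$2$3, T$2$2 - T$1$1]"
        using z ac t by (simp add: mv3 vec3_ops vec3_eq algebra_simps)
      show "T *v vector [T$1$2, T$2$2 - T$1$1, 0] = T$2$2 *s vector [T$1$2, T$2$2 - T$1$1, 0]"
        using z by (simp add: mv3 vec3_ops vec3_eq algebra_simps)
    qed
    then show ?thesis using iR by blast
  qed
qed



lemma Tlem: fixes T :: "'f::field^3^3" assumes ut: "UT T"
  shows "(\<forall>X. X ** T = T ** X) \<or> (\<exists>R l m. invertible R \<and> l \<noteq> m \<and> cj R T = diag3 l l m) \<or>
         (\<exists>R. invertible R \<and> (\<forall>X. X ** T = T ** X \<longrightarrow> UT (cj R X)))"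
proof (cases "T$1$1 = T$2$2")
  case ab: True
  show ?thesis
  proof (cases "T$2$2 = T$3$3")
    case True
    then show ?thesis using caseII[OF ut ab True] by blast
  next
    case bc: False
    show ?thesis
    proof (cases "T$1$2 = 0")
      case True
      then show ?thesis using IIIa_good[OF ut ab bc True] ab bc by metis
    next
      case False
      then show ?thesis using IIIa_bad[OF ut ab bc False] inv_mat1 by blast
    qed
  qed
next
  case ab: False
  show ?thesis
  proof (cases "T$2$2 = T$3$3")
    case True
    then show ?thesis using IIIb[OF ut True ab] ab by metis
  next
    case bc: False
    show ?thesis
    proof (cases "T$1$1 = T$3$3")
      case True
      then show ?thesis using IIIc[OF ut True ab] ab by metis
    next
      case False
      then show ?thesis using caseI[OF ut ab False bc] inv_mat1 by blast
    qed
  qed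
qed

lemma Blem: fixes T :: "'f::field^3^3"
  assumes ut: "UT T" and q: "T$1$3 = 0" and r: "T$2$3 = 0" and lm: "l \<noteq> m"
  shows "(\<forall>X. X ** T = T ** X) \<or> (\<exists>R. invertible R \<and> (\<forall>X. X ** T = T ** X \<longrightarrow> UT (cj R X))) \<or>
    (\<forall>X. (X ** T = T ** X) = (X ** diag3 l l m = diag3 l l m ** X)) \<or>
    (\<exists>R x y. invertible R \<and> x \<noteq> y \<and> cj R T = diag3 x y x \<and> cj R (diag3 l l m) = diag3 l l m)"
proof -
  have z: "T$2$1 = 0" "T$3$1 = 0" "T$3$2 = 0" using ut by (auto simp: UT_def)
  have dl: "diag3 l l m *v vector [a, b, 0] = l *s vector [a, b, 0]" for a b :: 'f
    by (simp add: mv3 vec3_ops vec3_eq diag3_def)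
  have dm: "diag3 l l m *v vector [0, 0, 1] = m *s vector [0, 0, 1]"
    by (simp add: mv3 vec3_ops vec3_eq diag3_def)
  show ?thesis
  proof (cases "T$1$1 = T$2$2")
    case ab: True
    show ?thesis
    proof (cases "T$2$2 = T$3$3")
      case True
      then show ?thesis using caseII[OF ut ab True] by blast
    next
      case bc: False
      show ?thesis
      proof (cases "T$1$2 = 0")
        case True
        have "T = diag3 (T$1$1) (T$1$1) (T$3$3)"
          using z q r True ab by (simp add: vec_eq_iff forall_3 diag3_def)
        then have "(X ** T = T ** X) = (X ** diag3 l l m = diag3 l l m ** X)" for X
          using diag_comm[of "T$1$1" "T$3$3" X] diag_comm[OF lm, of X] ab bc by metis
        then show ?thesis by blast
      next
        case False
        then show ?thesis using IIIa_bad[OF ut ab bc False] inv_mat1 by blast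
      qed
    qed
  next
    case ab: False
    show ?thesis
    proof (cases "T$2$2 = T$3$3")
      case bc: True
      define R where "R = cm (vector [T$1$2, T$2$2 - T$1$1, 0]) (vector [1,0,0]) (vector [0,0,1])"
      have iR: "invertible R" unfolding R_def
        by (rule cm_invertible) (use ab in \<open>simp add: det_cm\<close>)
      have 1: "cj R T = diag3 (T$2$2) (T$1$1) (T$2$2)" unfolding R_def
        by (rule diag_lem) (use iR z q r bc in \<open>simp_all add: R_def mv3 vec3_ops vec3_eq algebra_simps\<close>)
      have 2: "cj R (diag3 l l m) = diag3 l l m" unfolding R_def
        by (rule diag_lem) (use iR dl dm in \<open>simp_all add: R_def\<close>)
      show ?thesis using iR 1 2 ab by metis
    next
      case bc: False
      show ?thesis
      proof (cases "T$1$1 = T$3$3")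
        case ac: True
        define R where "R = cm (vector [1,0,0]) (vector [T$1$2, T$2$2 - T$1$1, 0]) (vector [0,0,1])"
        have iR: "invertible R" unfolding R_def
          by (rule cm_invertible) (use ab in \<open>simp add: det_cm\<close>)
        have 1: "cj R T = diag3 (T$1$1) (T$2$2) (T$1$1)" unfolding R_def
          by (rule diag_lem) (use iR z q r ac in \<open>simp_all add: R_def mv3 vec3_ops vec3_eq algebra_simps\<close>)
        have 2: "cj R (diag3 l l m) = diag3 l l m" unfolding R_def
          by (rule diag_lem) (use iR dl dm in \<open>simp_all add: R_def\<close>)
        show ?thesis using iR 1 2 ab by metis
      next
        case False
        then show ?thesis using caseI[OF ut ab False bc] inv_mat1 by blast
      qed
    qed
  qed
qed



lemma cubic_root: assumes "alg_closed TYPE('f::field)"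
  shows "\<exists>x::'f. x^3 + a * x^2 + b * x + c = 0"
proof -
  have "degree [:c, b, a, 1::'f:] \<ge> 1" by simp
  then obtain x where "poly [:c, b, a, 1::'f:] x = 0" using assms unfolding alg_closed_def by blast
  then have "x^3 + a * x^2 + b * x + c = 0"
    by (simp add: algebra_simps power2_eq_square power3_eq_cube)
  then show ?thesis by blast
qed

lemma quad_root: assumes "alg_closed TYPE('f::field)"
  shows "\<exists>x::'f. x^2 + a * x + b = 0"
proof -
  have "degree [:b, a, 1::'f:] \<ge> 1" by simp
  then obtain x where "poly [:b, a, 1::'f:] x = 0" using assms unfolding alg_closed_def by blast
  then have "x^2 + a * x + b = 0"
    by (simp add: algebra_simps power2_eq_square)
  then show ?thesis by blast
qed

lemma kernel_vec: fixes A :: "'f::field^3^3" assumes "det A = 0"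
  shows "\<exists>v. v \<noteq> 0 \<and> A *v v = 0"
proof -
  have "\<not> invertible A" using assms invertible_det_nz by blast
  then have "\<not> (\<exists>B. B ** A = mat 1)" using invertible_left_inverse by blast
  then show ?thesis using matrix_left_invertible_ker by blast
qed

lemma eigen3: assumes "alg_closed TYPE('f::field)"
  shows "\<exists>x (v::'f^3). v \<noteq> 0 \<and> M *v v = x *s v"
proof -
  define a where "a = - (M$1$1 + M$2$2 + M$3$3)"
  define b where "b = M$1$1 * M$2$2 + M$1$1 * M$3$3 + M$2$2 * M$3$3 - M$1$2 * M$2$1 - M$1$3 * M$3$1 - M$2$3 * M$3$2"
  define c where "c = - det M"
  obtain x where x: "x^3 + a * x^2 + b * x + c = 0" using cubic_root[OF assms] by blast
  have "det (mat x - M) = x^3 + a * x^2 + b * x + c"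
  proof -
    have m: "(mat x - M)$i$j = (if i = j then x else 0) - M$i$j" for i j by (simp add: mat_def)
    show ?thesis unfolding a_def b_def c_def det_3 m
      by simp algebra
  qed
  then have "det (mat x - M) = 0" using x by simp
  then obtain v where v: "v \<noteq> 0" "(mat x - M) *v v = 0" using kernel_vec by blast
  have "M *v v = x *s v" using v(2)
    by (simp add: vec_eq_iff forall_3 matrix_vector_mult_def sum_3 mat_def algebra_simps)
  then show ?thesis using v(1) by blast
qed

lemma eig2: assumes "alg_closed TYPE('f::field)"
  shows "\<exists>mu w1 w2::'f. (w1 \<noteq> 0 \<or> w2 \<noteq> 0) \<and> k11 * w1 + k12 * w2 = mu * w1 \<and> k21 * w1 + k22 * w2 = mu * w2"
proof (cases "k12 = 0")
  case True
  then show ?thesis by (intro exI[of _ k22] exI[of _ 0] exI[of _ 1]) simp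
next
  case False
  obtain mu where mu: "mu^2 + (- (k11 + k22)) * mu + (k11 * k22 - k12 * k21) = 0"
    using quad_root[OF assms] by blast
  have "k21 * k12 + k22 * (mu - k11) = mu * (mu - k11)"
    using mu by (simp add: algebra_simps power2_eq_square)
  then show ?thesis using False
    by (intro exI[of _ mu] exI[of _ k12] exI[of _ "mu - k11"]) (simp add: algebra_simps)
qed

lemma extend_basis: fixes v :: "'f::field^3" assumes "v \<noteq> 0"
  shows "\<exists>y z. invertible (cm v y z)"
proof -
  have "v$1 \<noteq> 0 \<or> v$2 \<noteq> 0 \<or> v$3 \<noteq> 0" using assms by (simp add: vec_eq_iff forall_3)
  then show ?thesis
  proof (elim disjE)
    assume "v$1 \<noteq> 0"
    then have "invertible (cm v (vector [0,1,0]) (vector [0,0,1]))" by (intro cm_invertible) (simp add: det_cm)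
    then show ?thesis by blast
  next
    assume "v$2 \<noteq> 0"
    then have "invertible (cm v (vector [1,0,0]) (vector [0,0,1]))" by (intro cm_invertible) (simp add: det_cm)
    then show ?thesis by blast
  next
    assume "v$3 \<noteq> 0"
    then have "invertible (cm v (vector [1,0,0]) (vector [0,1,0]))" by (intro cm_invertible) (simp add: det_cm)
    then show ?thesis by blast
  qed
qed

lemma schur: assumes "alg_closed TYPE('f::field)"
  shows "\<exists>S. invertible S \<and> UT (cj S (M::'f^3^3))"
proof -
  obtain x v where v: "v \<noteq> 0" "M *v v = x *s v" using eigen3[OF assms] by blast
  obtain y z where iS1: "invertible (cm v y z)" using extend_basis[OF v(1)] by blast
  define S1 where "S1 = cm v y z"
  define T1 where "T1 = cj S1 M"
  have c1: "T1 *v vector [1,0,0] = vector [x,0,0]" unfolding T1_def S1_def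
    by (rule cj_col[OF iS1]) (simp add: cm_apply v(2) vec3_ops)
  have c2: "(T1 *v vector [1,0,0])$i = (vector [x,0,0] :: 'f^3)$i" for i
    by (simp only: c1)
  have t1: "T1$1$1 = x" "T1$2$1 = 0" "T1$3$1 = 0"
    using c2[of 1] c2[of 2] c2[of 3] by (simp_all add: matrix_vector_mult_def sum_3)
  obtain mu w2 w3 where w: "w2 \<noteq> 0 \<or> w3 \<noteq> 0" "T1$2$2 * w2 + T1$2$3 * w3 = mu * w2"
     "T1$3$2 * w2 + T1$3$3 * w3 = mu * w3"
    using eig2[OF assms, of "T1$2$2" "T1$2$3" "T1$3$2" "T1$3$3"] by blast
  obtain e :: "'f^3" where e: "det (cm (vector [1,0,0]) (vector [0,w2,w3]) e) \<noteq> 0"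
  proof (cases "w2 = 0")
    case True
    then have "det (cm (vector [1,0,0]) (vector [0,w2,w3]) (vector [0,1,0])) \<noteq> 0"
      using w(1) by (simp add: det_cm)
    then show ?thesis using that by blast
  next
    case False
    then have "det (cm (vector [1,0,0]) (vector [0,w2,w3]) (vector [0,0,1])) \<noteq> 0"
      by (simp add: det_cm)
    then show ?thesis using that by blast
  qed
  define S2 where "S2 = cm (vector [1,0,0]) (vector [0,w2,w3]) e"
  have iS2': "invertible (cm (vector [1,0,0]) (vector [0,w2,w3]) e)" by (rule cm_invertible[OF e])
  have iS2: "invertible S2" unfolding S2_def by (rule iS2')
  have "UT (cj (cm (vector [1,0,0]) (vector [0,w2,w3]) e) T1)"
  proof (rule flag_lem[OF iS2'])
    show "T1 *v vector [1,0,0] = x *s vector [1,0,0]" using c1 by (simp add: vec3_ops)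
    show "T1 *v vector [0,w2,w3] = (T1$1$2 * w2 + T1$1$3 * w3) *s vector [1,0,0] + mu *s vector [0,w2,w3]"
      using w(2,3) by (simp add: mv3 vec3_ops vec3_eq)
  qed
  then have u: "UT (cj S2 T1)" by (simp only: S2_def)
  have "cj (S1 ** S2) M = cj S2 T1" unfolding T1_def by (rule cj_comp[OF iS1[folded S1_def] iS2])
  then have "UT (cj (S1 ** S2) M)" using u by simp
  moreover have "invertible (S1 ** S2)" using iS1 iS2 by (simp add: S1_def invertible_mult)
  ultimately show ?thesis by blast
qed

lemma flag3:
  fixes u v w :: "'f::field^3"
  assumes inv: "invertible (cm u v w)" and hu: "M *v u = a *s u" and hv: "M *v v = b *s u + c *s v"
    and hw: "M *v w = f *s w"
  shows "UT (cj (cm u v w) M) \<and> (cj (cm u v w) M)$1$3 = 0 \<and> (cj (cm u v w) M)$2$3 = 0"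
proof -
  have 3: "cj (cm u v w) M *v vector [0,0,1] = vector [0,0,f]"
    by (rule cj_col[OF inv]) (simp add: cm_apply hw)
  then show ?thesis using flag_lem[OF inv hu hv] by (simp add: mv3 vec3_eq)
qed

lemma block_schur: assumes "alg_closed TYPE('f::field)"
  and z: "B$1$3 = 0" "B$2$3 = 0" "B$3$1 = 0" "B$3$2 = 0"
  shows "\<exists>R. invertible R \<and> UT (cj R (B::'f^3^3)) \<and> (cj R B)$1$3 = 0 \<and> (cj R B)$2$3 = 0 \<and>
           cj R (diag3 l l m) = diag3 l l m"
proof -
  obtain mu w1 w2 where w: "w1 \<noteq> 0 \<or> w2 \<noteq> 0" "B$1$1 * w1 + B$1$2 * w2 = mu * w1"
     "B$2$1 * w1 + B$2$2 * w2 = mu * w2"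
    using eig2[OF assms(1), of "B$1$1" "B$1$2" "B$2$1" "B$2$2"] by blast
  define u :: "'f^3" where "u = vector [w1, w2, 0]"
  have dl: "diag3 l l m *v vector [a, b, 0] = l *s vector [a, b, 0]" for a b :: 'f
    by (simp add: mv3 vec3_ops vec3_eq diag3_def)
  have dm: "diag3 l l m *v vector [0, 0, 1] = m *s vector [0, 0, 1]"
    by (simp add: mv3 vec3_ops vec3_eq diag3_def)
  have hu: "B *v u = mu *s u" using w(2,3) z by (simp add: u_def mv3 vec3_ops vec3_eq)
  have hw: "B *v vector [0,0,1] = B$3$3 *s vector [0,0,1]" using z by (simp add: mv3 vec3_ops vec3_eq)
  show ?thesis
  proof (cases "w1 = 0")
    case False
    define R where "R = cm u (vector [0,1,0]) (vector [0,0,1])"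
    have iR: "invertible R" unfolding R_def
      by (rule cm_invertible) (use False in \<open>simp add: det_cm u_def\<close>)
    have hv: "B *v vector [0,1,0] = (B$1$2 / w1) *s u + (B$2$2 - B$1$2 * w2 / w1) *s vector [0,1,0]"
      using z False by (simp add: u_def mv3 vec3_ops vec3_eq field_simps)
    have 1: "UT (cj R B) \<and> (cj R B)$1$3 = 0 \<and> (cj R B)$2$3 = 0"
      unfolding R_def using flag3[OF iR[unfolded R_def] hu hv hw] .
    have 2: "cj R (diag3 l l m) = diag3 l l m" unfolding R_def
      by (rule diag_lem) (use iR dl dm in \<open>simp_all add: R_def u_def\<close>)
    show ?thesis using iR 1 2 by blast
  next
    case True
    then have w2: "w2 \<noteq> 0" using w(1) by simp
    define R where "R = cm u (vector [1,0,0]) (vector [0,0,1])"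
    have iR: "invertible R" unfolding R_def
      by (rule cm_invertible) (use w2 True in \<open>simp add: det_cm u_def\<close>)
    have hv: "B *v vector [1,0,0] = (B$2$1 / w2) *s u + B$1$1 *s vector [1,0,0]"
      using z w2 True by (simp add: u_def mv3 vec3_ops vec3_eq field_simps)
    have 1: "UT (cj R B) \<and> (cj R B)$1$3 = 0 \<and> (cj R B)$2$3 = 0"
      unfolding R_def using flag3[OF iR[unfolded R_def] hu hv hw] .
    have 2: "cj R (diag3 l l m) = diag3 l l m" unfolding R_def
      by (rule diag_lem) (use iR dl dm in \<open>simp_all add: R_def u_def\<close>)
    show ?thesis using iR 1 2 by blast
  qed
qed



lemma diag_nz: assumes "invertible (diag3 a b (c::'f::field))" shows "a \<noteq> 0" "b \<noteq> 0" "c \<noteq> 0"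
proof -
  have "det (diag3 a b c) \<noteq> 0" using assms invertible_det_nz by blast
  then have "a * b * c \<noteq> 0" by (simp add: det_3 diag3_def)
  then show "a \<noteq> 0" "b \<noteq> 0" "c \<noteq> 0" by auto
qed

theorem corollary2p2:
  fixes G :: "('g, 'c) monoid_scheme"
    and \<rho> :: "'g \<Rightarrow> 'f::field ^3^3"
    and A B :: 'g
  assumes "group G"
    and "A \<in> carrier G" and "B \<in> carrier G"
    and "A \<otimes>\<^bsub>G\<^esub> B = B \<otimes>\<^bsub>G\<^esub> A"
    and "centraliser G A \<noteq> carrier G" and "centraliser G B \<noteq> carrier G"
    and "\<not> solvable (G\<lparr>carrier := centraliser G A\<rparr>)"
    and "\<not> solvable (G\<lparr>carrier := centraliser G B\<rparr>)"
    and "centraliser G A \<noteq> centraliser G B"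
    and "alg_closed TYPE('f)"
    and "\<rho> \<in> hom G GL3" and "inj_on \<rho> (carrier G)"
  shows "\<exists>P::'f^3^3. invertible P \<and>
           (\<exists>l m x y. l \<noteq> 0 \<and> m \<noteq> 0 \<and> x \<noteq> 0 \<and> y \<noteq> 0 \<and> l \<noteq> m \<and> x \<noteq> y \<and>
              matrix_inv P ** \<rho> A ** P = diag3 l l m \<and>
              matrix_inv P ** \<rho> B ** P = diag3 x y x)"
proof -
  note grp = assms(1) and hom = assms(11) and inj = assms(12) and ac = assms(10)
  have rinv: "invertible (\<rho> g)" if "g \<in> carrier G" for g
    using hom_in_carrier[OF hom that] by (simp add: GL3_simps)
  have rmul: "\<rho> (mult G x y) = \<rho> x ** \<rho> y" if "x \<in> carrier G" "y \<in> carrier G" for x y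
    using hom_mult[OF hom that] by (simp add: GL3_simps)
  have ciA: "g \<in> centraliser G A \<longleftrightarrow> g \<in> carrier G \<and> \<rho> g ** \<rho> A = \<rho> A ** \<rho> g" for g
    by (rule cent_iff[OF grp assms(2) hom inj])
  have ciB: "g \<in> centraliser G B \<longleftrightarrow> g \<in> carrier G \<and> \<rho> g ** \<rho> B = \<rho> B ** \<rho> g" for g
    by (rule cent_iff[OF grp assms(3) hom inj])
  have AB: "\<rho> A ** \<rho> B = \<rho> B ** \<rho> A" using assms(4) rmul[OF assms(2,3)] rmul[OF assms(3,2)] by simp
  obtain S where iS: "invertible S" and uS: "UT (cj S (\<rho> A))" using schur[OF ac] by blast
  define T where "T = cj S (\<rho> A)"
  have "\<exists>R l m. invertible R \<and> l \<noteq> m \<and> cj R T = diag3 l l m"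
  proof -
    have "\<not> (\<forall>X. X ** T = T ** X)"
    proof
      assume h: "\<forall>X. X ** T = T ** X"
      have "centraliser G A = carrier G"
      proof
        show "centraliser G A \<subseteq> carrier G" using ciA by blast
        show "carrier G \<subseteq> centraliser G A"
        proof
          fix g assume g: "g \<in> carrier G"
          have "cj S (\<rho> g) ** cj S (\<rho> A) = cj S (\<rho> A) ** cj S (\<rho> g)" using h by (simp add: T_def)
          then have "\<rho> g ** \<rho> A = \<rho> A ** \<rho> g" using cj_comm[OF iS] by blast
          then show "g \<in> centraliser G A" using ciA g by blast
        qed
      qed
      then show False using assms(5) by simp
    qed
    moreover have "\<not> (\<exists>R. invertible R \<and> (\<forall>X. X ** T = T ** X \<longrightarrow> UT (cj R X)))"
    proof
      assume "\<exists>R. invertible R \<and> (\<forall>X. X ** T = T ** X \<longrightarrow> UT (cj R X))"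
      then obtain R where iR: "invertible R" and hR: "\<forall>X. X ** T = T ** X \<longrightarrow> UT (cj R X)" by blast
      have "\<forall>g\<in>centraliser G A. UT (cj (S ** R) (\<rho> g))"
      proof
        fix g assume "g \<in> centraliser G A"
        then have g: "g \<in> carrier G" "\<rho> g ** \<rho> A = \<rho> A ** \<rho> g" using ciA by auto
        then have "cj S (\<rho> g) ** T = T ** cj S (\<rho> g)" using cj_comm[OF iS] by (simp add: T_def)
        then have "UT (cj R (cj S (\<rho> g)))" using hR by blast
        then show "UT (cj (S ** R) (\<rho> g))" by (simp add: cj_comp[OF iS iR])
      qed
      then have "solvable (G\<lparr>carrier := centraliser G A\<rparr>)"
        by (rule solv[OF grp assms(2) hom inj invertible_mult[OF iS iR]])
      then show False using assms(7) by simp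
    qed
    ultimately show ?thesis using Tlem[OF uS[folded T_def]] by blast
  qed
  then obtain R l m where iR: "invertible R" and lm: "l \<noteq> m" and RT: "cj R T = diag3 l l m" by blast
  define P0 where "P0 = S ** R"
  have iP0: "invertible P0" unfolding P0_def using iS iR by (rule invertible_mult)
  have P0A: "cj P0 (\<rho> A) = diag3 l l m" unfolding P0_def using RT by (simp add: cj_comp[OF iS iR] T_def)
  define B' where "B' = cj P0 (\<rho> B)"
  have "B' ** diag3 l l m = diag3 l l m ** B'"
    unfolding B'_def P0A[symmetric] cj_comm[OF iP0] using AB by simp
  then have bz: "B'$1$3 = 0" "B'$2$3 = 0" "B'$3$1 = 0" "B'$3$2 = 0" using diag_comm[OF lm] by auto
  obtain R2 where iR2: "invertible R2" and uR2: "UT (cj R2 B')" and z2: "(cj R2 B')$1$3 = 0" "(cj R2 B')$2$3 = 0"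
    and R2D: "cj R2 (diag3 l l m) = diag3 l l m"
    using block_schur[OF ac bz] by blast
  define Q where "Q = P0 ** R2"
  have iQ: "invertible Q" unfolding Q_def using iP0 iR2 by (rule invertible_mult)
  define B'' where "B'' = cj R2 B'"
  have QA: "cj Q (\<rho> A) = diag3 l l m" unfolding Q_def by (simp add: cj_comp[OF iP0 iR2] P0A R2D)
  have QB: "cj Q (\<rho> B) = B''" unfolding Q_def B''_def B'_def by (simp add: cj_comp[OF iP0 iR2])
  have commQ: "(cj Q (\<rho> g) ** M = M ** cj Q (\<rho> g)) \<longleftrightarrow> (\<rho> g ** N = N ** \<rho> g)"
    if "cj Q N = M" for g M N
    using cj_comm[OF iQ, of "\<rho> g" N] that by simp
  have Bcases: "(\<forall>X. X ** B'' = B'' ** X) \<or> (\<exists>R. invertible R \<and> (\<forall>X. X ** B'' = B'' ** X \<longrightarrow> UT (cj R X))) \<or>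
    (\<forall>X. (X ** B'' = B'' ** X) = (X ** diag3 l l m = diag3 l l m ** X)) \<or>
    (\<exists>R x y. invertible R \<and> x \<noteq> y \<and> cj R B'' = diag3 x y x \<and> cj R (diag3 l l m) = diag3 l l m)"
    using Blem[OF uR2[folded B''_def] z2[folded B''_def] lm] .
  have n1: "\<not> (\<forall>X. X ** B'' = B'' ** X)"
  proof
    assume h: "\<forall>X. X ** B'' = B'' ** X"
    have "centraliser G B = carrier G"
    proof
      show "centraliser G B \<subseteq> carrier G" using ciB by blast
      show "carrier G \<subseteq> centraliser G B"
      proof
        fix g assume g: "g \<in> carrier G"
        have "\<rho> g ** \<rho> B = \<rho> B ** \<rho> g" using h commQ[OF QB, of g] by blast
        then show "g \<in> centraliser G B" using ciB g by blast
      qed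
    qed
    then show False using assms(6) by simp
  qed
  have n2: "\<not> (\<exists>R. invertible R \<and> (\<forall>X. X ** B'' = B'' ** X \<longrightarrow> UT (cj R X)))"
  proof
    assume "\<exists>R. invertible R \<and> (\<forall>X. X ** B'' = B'' ** X \<longrightarrow> UT (cj R X))"
    then obtain R3 where iR3: "invertible R3" and hR: "\<forall>X. X ** B'' = B'' ** X \<longrightarrow> UT (cj R3 X)" by blast
    have "\<forall>g\<in>centraliser G B. UT (cj (Q ** R3) (\<rho> g))"
    proof
      fix g assume "g \<in> centraliser G B"
      then have g: "g \<in> carrier G" "\<rho> g ** \<rho> B = \<rho> B ** \<rho> g" using ciB by auto
      then have "cj Q (\<rho> g) ** B'' = B'' ** cj Q (\<rho> g)" using commQ[OF QB, of g] by blast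
      then have "UT (cj R3 (cj Q (\<rho> g)))" using hR by blast
      then show "UT (cj (Q ** R3) (\<rho> g))" by (simp add: cj_comp[OF iQ iR3])
    qed
    then have "solvable (G\<lparr>carrier := centraliser G B\<rparr>)"
      by (rule solv[OF grp assms(3) hom inj invertible_mult[OF iQ iR3]])
    then show False using assms(8) by simp
  qed
  have n3: "\<not> (\<forall>X. (X ** B'' = B'' ** X) = (X ** diag3 l l m = diag3 l l m ** X))"
  proof
    assume h: "\<forall>X. (X ** B'' = B'' ** X) = (X ** diag3 l l m = diag3 l l m ** X)"
    have "g \<in> centraliser G A \<longleftrightarrow> g \<in> centraliser G B" for g
    proof (cases "g \<in> carrier G")
      case True
      have "(\<rho> g ** \<rho> A = \<rho> A ** \<rho> g) \<longleftrightarrow> (\<rho> g ** \<rho> B = \<rho> B ** \<rho> g)"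
        using h commQ[OF QB, of g] commQ[OF QA, of g] by blast
      then show ?thesis using ciA ciB True by blast
    next
      case False
      then show ?thesis using ciA ciB by blast
    qed
    then have "centraliser G A = centraliser G B" by blast
    then show False using assms(9) by simp
  qed
  obtain R3 x y where iR3: "invertible R3" and xy: "x \<noteq> y" and R3B: "cj R3 B'' = diag3 x y x"
      and R3D: "cj R3 (diag3 l l m) = diag3 l l m"
    using Bcases n1 n2 n3 by blast
  define P where "P = Q ** R3"
  have iP: "invertible P" unfolding P_def using iQ iR3 by (rule invertible_mult)
  have PA: "cj P (\<rho> A) = diag3 l l m" unfolding P_def by (simp add: cj_comp[OF iQ iR3] QA R3D)
  have PB: "cj P (\<rho> B) = diag3 x y x" unfolding P_def by (simp add: cj_comp[OF iQ iR3] QB R3B)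
  have nA: "invertible (diag3 l l m)" using cj_invertible[OF iP rinv[OF assms(2)]] PA by simp
  have nB: "invertible (diag3 x y x)" using cj_invertible[OF iP rinv[OF assms(3)]] PB by simp
  show ?thesis
    using iP PA PB lm xy diag_nz[OF nA] diag_nz[OF nB] unfolding cj_def by blast
qed


end
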